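(* Let $M>0$ be a real number (the file size), let $k\ge 1$ be an integer, let $\tau\ge 1$ be a real number and let $d_1,d_2$ be nonnegative integers. Let $L=[L[0],L[1],\dots,L[k-1]]$ be a list of positive real numbers in nondecreasing order, $L[0]\le L[1]\le\cdots\le L[k-1]$. For $i=0,\dots,k-1$ define $$g(i)=\sum_{j=0}^{i-1}L[j] \quad(\text{so } g(0)=0),\qquad f(i)=\frac{M}{L[i](k-i)+g(i)} .$$ For $\beta_e>0$, let the threshold function $\alpha^*(d_1,d_2,\beta_e)$ be the minimum $\alpha\ge 0$ such that the mincut condition $$\sum_{i=0}^{k-1}\min\{L[i]\beta_e,\ \alpha\}\ \ge\ M$$ holds, considered subject to the constraint $\gamma^1=(d_1\tau+d_2)\beta_e\ge\alpha$. Then, for $\beta_e\ge f(k-1)$, $$\alpha^*(d_1,d_2,\beta_e)=\begin{cases}\dfrac{M}{k}, & \beta_e\in[f(0),+\infty),\\[2mm] \dfrac{M-g(i)\beta_e}{k-i}, & \beta_e\in[f(i),f(i-1)),\quad i=1,\dots,k-1,\end{cases}$$ where an interval $[f(i),f(i-1))$ with $f(i)=f(i-1)$ is understood to be empty.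
   Context: Setting: a regenerating-code distributed storage system with storage nodes placed in two racks. A file of size $M$ is stored so that each node holds $\alpha$ data units and any $k$ nodes suffice to recover the file. When a node fails, a newcomer node downloads data from $d=d_1+d_2$ helper nodes: $d_1$ helpers in the first rack and $d_2$ in the second; a helper in the same rack as the newcomer sends $\beta_c=\tau\beta_e$ data units and a helper in the other rack sends $\beta_e$ data units ($\tau\ge1$). The repair bandwidth of a newcomer in the first rack is $\gamma^1=(d_1\tau+d_2)\beta_e$. In the information flow graph, the income of a newcomer is the total weight of the arcs entering it (from its helpers); the file is recoverable iff the minimum over data collectors of the $S$–$DC$ mincut, which equals $\sum_{i}\min\{\text{income}_i,\alpha\}$ over the $k$ newcomers minimizing it, is at least $M$. The list $L$ is the nondecreasing ordering of these $k$ incomes divided by $\beta_e$. The threshold function is the minimal $\alpha$ satisfying the mincut condition. *)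

theory Defs
  imports Complex_Main
begin

definition gsum :: "real list \<Rightarrow> nat \<Rightarrow> real" where
  "gsum L i = (\<Sum>j<i. L ! j)"

definition fthr :: "real list \<Rightarrow> real \<Rightarrow> nat \<Rightarrow> real" where
  "fthr L M i = M / (L ! i * real (length L - i) + gsum L i)"

definition mincut_ok :: "real list \<Rightarrow> real \<Rightarrow> real \<Rightarrow> real \<Rightarrow> bool" where
  "mincut_ok L M \<beta>e \<alpha> \<longleftrightarrow> (\<Sum>i<length L. min (L ! i * \<beta>e) \<alpha>) \<ge> M"

definition gamma1 :: "nat \<Rightarrow> nat \<Rightarrow> real \<Rightarrow> real \<Rightarrow> real" where
  "gamma1 d1 d2 \<tau> \<beta>e = (real d1 * \<tau> + real d2) * \<beta>e"

definition is_min :: "real set \<Rightarrow> real \<Rightarrow> bool" where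
  "is_min S v \<longleftrightarrow> v \<in> S \<and> (\<forall>a\<in>S. v \<le> a)"

definition is_threshold ::
  "real list \<Rightarrow> real \<Rightarrow> nat \<Rightarrow> nat \<Rightarrow> real \<Rightarrow> real \<Rightarrow> real \<Rightarrow> bool" where
  "is_threshold L M d1 d2 \<tau> \<beta>e v \<longleftrightarrow>
     is_min {\<alpha>. 0 \<le> \<alpha> \<and> mincut_ok L M \<beta>e \<alpha>} v \<and>
     (v \<le> gamma1 d1 d2 \<tau> \<beta>e \<longrightarrow>
        is_min {\<alpha>. 0 \<le> \<alpha> \<and> \<alpha> \<le> gamma1 d1 d2 \<tau> \<beta>e \<and> mincut_ok L M \<beta>e \<alpha>} v)"

end

theory Submission
  imports Defs
begin

lemma split_sum:
  fixes i n :: nat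
  assumes "i \<le> n"
  shows "(\<Sum>j<n. h j) = (\<Sum>j<i. h j) + (\<Sum>j\<in>{i..<n}. (h j::real))"
proof -
  have "(\<Sum>j<n. h j) = (\<Sum>j\<in>{0..<n}. h j)" by (simp add: atLeast0LessThan)
  also have "\<dots> = (\<Sum>j\<in>{0..<i}. h j) + (\<Sum>j\<in>{i..<n}. h j)"
    using assms by (simp add: sum.atLeastLessThan_concat)
  finally show ?thesis by (simp add: atLeast0LessThan)
qed

lemma key:
  fixes L :: "real list" and M \<beta> v :: real
  assumes ik: "i < length L" and hv: "0 \<le> v"
    and lo: "\<forall>j<i. L!j*\<beta> \<le> v"
    and hi: "\<forall>j. i \<le> j \<longrightarrow> j < length L \<longrightarrow> v \<le> L!j*\<beta>"
    and eq: "gsum L i * \<beta> + real (length L - i) * v = M"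
  shows "is_min {\<alpha>. 0 \<le> \<alpha> \<and> mincut_ok L M \<beta> \<alpha>} v"
proof -
  let ?k = "length L"
  have A: "(\<Sum>j<?k. min (L!j*\<beta>) a) = (\<Sum>j<i. min (L!j*\<beta>) a) + (\<Sum>j\<in>{i..<?k}. min (L!j*\<beta>) a)" for a
    using split_sum[of i ?k] ik by simp
  have g: "gsum L i * \<beta> = (\<Sum>j<i. L!j*\<beta>)" by (simp add: gsum_def sum_distrib_right)
  have "(\<Sum>j<i. min (L!j*\<beta>) v) = (\<Sum>j<i. L!j*\<beta>)"
    by (rule sum.cong) (use lo in auto)
  moreover have "(\<Sum>j\<in>{i..<?k}. min (L!j*\<beta>) v) = (\<Sum>j\<in>{i..<?k}. v)"
    by (rule sum.cong) (use hi in auto)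
  ultimately have Fv: "mincut_ok L M \<beta> v"
    unfolding mincut_ok_def using A[of v] g eq by simp
  have less: "\<not> mincut_ok L M \<beta> a" if "a < v" for a
  proof -
    have "(\<Sum>j<i. min (L!j*\<beta>) a) \<le> (\<Sum>j<i. L!j*\<beta>)" by (rule sum_mono) simp
    moreover have "(\<Sum>j\<in>{i..<?k}. min (L!j*\<beta>) a) \<le> (\<Sum>j\<in>{i..<?k}. a)" by (rule sum_mono) simp
    moreover have "(\<Sum>j\<in>{i..<?k}. a) = real (?k - i) * a" by simp
    moreover have "real (?k - i) * a < real (?k - i) * v" using that ik by simp
    ultimately have "(\<Sum>j<?k. min (L!j*\<beta>) a) < M" using A[of a] g eq by linarith
    thus ?thesis unfolding mincut_ok_def by simp
  qed
  show ?thesis unfolding is_min_def using Fv hv less by (auto simp: not_less[symmetric])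
qed

lemma thr:
  assumes "is_min {\<alpha>. 0 \<le> \<alpha> \<and> mincut_ok L M \<beta> \<alpha>} v"
  shows "is_threshold L M d1 d2 \<tau> \<beta> v"
  using assms unfolding is_threshold_def is_min_def by auto

theorem theorem1:
  fixes M \<tau> \<beta>e :: real and k d1 d2 :: nat and L :: "real list"
  assumes "M > 0" and "k \<ge> 1" and "\<tau> \<ge> 1"
    and "length L = k" and "\<forall>x\<in>set L. x > 0" and "sorted L"
    and "\<beta>e > 0" and "\<beta>e \<ge> fthr L M (k - 1)"
  shows "(\<beta>e \<ge> fthr L M 0 \<longrightarrow> is_threshold L M d1 d2 \<tau> \<beta>e (M / real k)) \<and>
         (\<forall>i\<in>{1..<k}. fthr L M i \<le> \<beta>e \<and> \<beta>e < fthr L M (i - 1) \<longrightarrow>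
            is_threshold L M d1 d2 \<tau> \<beta>e ((M - gsum L i * \<beta>e) / real (k - i)))"
proof (intro conjI impI ballI)
  have pos: "j < k \<Longrightarrow> L!j > 0" for j using assms(4,5) by auto
  have mono: "j \<le> j' \<Longrightarrow> j' < k \<Longrightarrow> L!j \<le> L!j'" for j j'
    using assms(4,6) by (simp add: sorted_nth_mono)
  have gnn: "gsum L i \<ge> 0" if "i \<le> k" for i
    unfolding gsum_def using that pos by (intro sum_nonneg) (auto intro: less_imp_le)
  {
    assume h: "\<beta>e \<ge> fthr L M 0"
    have L0: "L!0 > 0" using pos assms(2) by simp
    have "M / (L!0 * real k) \<le> \<beta>e" using h assms(4) by (simp add: fthr_def gsum_def)
    hence "M \<le> \<beta>e * (L!0 * real k)" using L0 assms(2)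
      by (simp add: divide_le_eq)
    hence v0: "M / real k \<le> L!0 * \<beta>e" using assms(2) by (simp add: divide_le_eq algebra_simps)
    show "is_threshold L M d1 d2 \<tau> \<beta>e (M / real k)"
    proof (rule thr, rule key[where i=0])
      show "0 < length L" using assms by simp
      show "0 \<le> M / real k" using assms by simp
      show "\<forall>j<0. L!j*\<beta>e \<le> M / real k" by simp
      show "\<forall>j. 0 \<le> j \<longrightarrow> j < length L \<longrightarrow> M / real k \<le> L!j*\<beta>e"
      proof (intro allI impI)
        fix j assume "j < length L"
        hence "L!0 \<le> L!j" using mono assms(4) by simp
        thus "M / real k \<le> L!j*\<beta>e" using v0 assms(7) mult_right_mono[of "L!0" "L!j" \<beta>e] by linarith
      qed
      show "gsum L 0 * \<beta>e + real (length L - 0) * (M / real k) = M"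
        using assms(2,4) by (simp add: gsum_def)
    qed
  }
  {
    fix i assume i: "i \<in> {1..<k}" and h: "fthr L M i \<le> \<beta>e \<and> \<beta>e < fthr L M (i - 1)"
    define v where "v = (M - gsum L i * \<beta>e) / real (k - i)"
    have ki: "real (k - i) > 0" using i by simp
    have gi: "gsum L i = gsum L (i-1) + L!(i-1)"
      using i unfolding gsum_def by (cases i) auto
    have d1: "L!i * real (k - i) + gsum L i > 0"
      using pos[of i] i gnn[of i] ki by (simp add: add_pos_nonneg)
    have d2: "L!(i-1) * real (k - (i-1)) + gsum L (i-1) > 0"
      using pos[of "i-1"] i gnn[of "i-1"] by (intro add_pos_nonneg) auto
    have "M \<le> \<beta>e * (L!i * real (k - i) + gsum L i)"
      using h d1 by (simp add: fthr_def assms(4) divide_le_eq)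
    hence hi0: "v \<le> L!i * \<beta>e" unfolding v_def using ki
      by (simp add: divide_le_eq algebra_simps)
    have "\<beta>e * (L!(i-1) * real (k - (i-1)) + gsum L (i-1)) < M"
      using h d2 by (simp add: fthr_def assms(4) less_divide_eq)
    moreover have "real (k - (i-1)) = real (k - i) + 1" using i by auto
    ultimately have "\<beta>e * (L!(i-1) * real (k - i) + gsum L i) < M"
      using gi by (simp add: algebra_simps)
    hence lo0: "L!(i-1) * \<beta>e < v" unfolding v_def using ki
      by (simp add: less_divide_eq algebra_simps)
    have "i - 1 < k" using i by (simp, linarith)
    hence "L!(i-1) > 0" using pos by blast
    hence "L!(i-1) * \<beta>e > 0" using assms(7) by simp
    hence vnn: "0 \<le> v" using lo0 by simp
    show "is_threshold L M d1 d2 \<tau> \<beta>e ((M - gsum L i * \<beta>e) / real (k - i))"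
      unfolding v_def[symmetric]
    proof (rule thr, rule key[where i=i])
      show "i < length L" using i assms(4) by simp
      show "0 \<le> v" by (fact vnn)
      show "\<forall>j<i. L!j*\<beta>e \<le> v"
      proof (intro allI impI)
        fix j assume "j < i"
        hence "L!j \<le> L!(i-1)" using mono i by simp
        thus "L!j*\<beta>e \<le> v" using lo0 assms(7) mult_right_mono[of "L!j" "L!(i-1)" \<beta>e] by linarith
      qed
      show "\<forall>j. i \<le> j \<longrightarrow> j < length L \<longrightarrow> v \<le> L!j*\<beta>e"
      proof (intro allI impI)
        fix j assume "i \<le> j" "j < length L"
        hence "L!i \<le> L!j" using mono assms(4) by simp
        thus "v \<le> L!j*\<beta>e" using hi0 assms(7) mult_right_mono[of "L!i" "L!j" \<beta>e] by linarith
      qed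
      show "gsum L i * \<beta>e + real (length L - i) * v = M"
        unfolding v_def using ki assms(4) by simp
    qed
  }
qed

end
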